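(* Let $G$ be a graph with no induced $P_7$, $C_4$, $C_6$ or $C_7$, and let $H=(B_1,\dots,B_5)$ be a nice blowup of $C_5$ in $G$. For every $v\in V(G)\setminus V(H)$, the set $\operatorname{supp}(v)$ consists of consecutive integers modulo $5$ and has size in $\{0,1,2,3,5\}$.
   Context: Indices modulo $5$. A nice blowup of $C_5$ is a tuple $(B_1,\dots,B_5)$ of pairwise disjoint cliques such that every vertex of $B_i$ has a neighbor in $B_{i-1}$ and in $B_{i+1}$, $B_i$ is anticomplete to $B_{i+2}$, and there are no $a\in B_i$, distinct $b,c\in B_{i+1}$, $d\in B_{i+2}$ with $G[\{a,b,c,d\}]\cong P_4$. $V(H)=B_1\cup\dots\cup B_5$. For $v\notin V(H)$, $\operatorname{supp}(v)=\{i\in\{1,\dots,5\}: v \text{ has a neighbor in } B_i\}$. *)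

theory Defs
  imports Main
begin

definition is_graph :: "'a set \<Rightarrow> ('a \<Rightarrow> 'a \<Rightarrow> bool) \<Rightarrow> bool" where
  "is_graph V E \<longleftrightarrow> finite V \<and> (\<forall>x y. E x y \<longrightarrow> E y x) \<and> (\<forall>x. \<not> E x x)
     \<and> (\<forall>x y. E x y \<longrightarrow> x \<in> V \<and> y \<in> V)"

definition induced_path :: "('a \<Rightarrow> 'a \<Rightarrow> bool) \<Rightarrow> 'a list \<Rightarrow> bool" where
  "induced_path E xs \<longleftrightarrow> distinct xs \<and>
     (\<forall>i<length xs. \<forall>j<length xs. E (xs!i) (xs!j) \<longleftrightarrow> (i + 1 = j \<or> j + 1 = i))"

definition induced_cycle :: "('a \<Rightarrow> 'a \<Rightarrow> bool) \<Rightarrow> 'a list \<Rightarrow> bool" where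
  "induced_cycle E xs \<longleftrightarrow> distinct xs \<and> length xs \<ge> 3 \<and>
     (\<forall>i<length xs. \<forall>j<length xs. E (xs!i) (xs!j) \<longleftrightarrow>
        ((i + 1) mod length xs = j \<or> (j + 1) mod length xs = i))"

definition has_induced_P :: "'a set \<Rightarrow> ('a \<Rightarrow> 'a \<Rightarrow> bool) \<Rightarrow> nat \<Rightarrow> bool" where
  "has_induced_P V E k \<longleftrightarrow> (\<exists>xs. set xs \<subseteq> V \<and> length xs = k \<and> induced_path E xs)"

definition has_induced_C :: "'a set \<Rightarrow> ('a \<Rightarrow> 'a \<Rightarrow> bool) \<Rightarrow> nat \<Rightarrow> bool" where
  "has_induced_C V E k \<longleftrightarrow> (\<exists>xs. set xs \<subseteq> V \<and> length xs = k \<and> induced_cycle E xs)"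

definition induces_P4 :: "('a \<Rightarrow> 'a \<Rightarrow> bool) \<Rightarrow> 'a set \<Rightarrow> bool" where
  "induces_P4 E S \<longleftrightarrow> (\<exists>xs. set xs = S \<and> length xs = 4 \<and> induced_path E xs)"

definition clique :: "('a \<Rightarrow> 'a \<Rightarrow> bool) \<Rightarrow> 'a set \<Rightarrow> bool" where
  "clique E S \<longleftrightarrow> (\<forall>x\<in>S. \<forall>y\<in>S. x \<noteq> y \<longrightarrow> E x y)"

text \<open>Nice blowup of C5; the bags are indexed by 0..4 (modulo 5), i.e. B i stands for B_{i+1}.\<close>
definition nice_blowup_C5 :: "'a set \<Rightarrow> ('a \<Rightarrow> 'a \<Rightarrow> bool) \<Rightarrow> (nat \<Rightarrow> 'a set) \<Rightarrow> bool" where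
  "nice_blowup_C5 V E B \<longleftrightarrow>
     (\<forall>i<5. B i \<subseteq> V \<and> clique E (B i)) \<and>
     (\<forall>i<5. \<forall>j<5. i \<noteq> j \<longrightarrow> B i \<inter> B j = {}) \<and>
     (\<forall>i<5. \<forall>v\<in>B i. (\<exists>u\<in>B ((i + 4) mod 5). E v u) \<and> (\<exists>u\<in>B ((i + 1) mod 5). E v u)) \<and>
     (\<forall>i<5. \<forall>x\<in>B i. \<forall>y\<in>B ((i + 2) mod 5). \<not> E x y) \<and>
     (\<forall>i<5. \<forall>a\<in>B i. \<forall>b\<in>B ((i + 1) mod 5). \<forall>c\<in>B ((i + 1) mod 5). \<forall>d\<in>B ((i + 2) mod 5).
        b \<noteq> c \<longrightarrow> \<not> induces_P4 E {a, b, c, d})"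

definition VH :: "(nat \<Rightarrow> 'a set) \<Rightarrow> 'a set" where
  "VH B = (\<Union>i<5. B i)"

definition supp :: "('a \<Rightarrow> 'a \<Rightarrow> bool) \<Rightarrow> (nat \<Rightarrow> 'a set) \<Rightarrow> 'a \<Rightarrow> nat set" where
  "supp E B v = {i. i < 5 \<and> (\<exists>u\<in>B i. E v u)}"

definition consecutive_mod5 :: "nat set \<Rightarrow> bool" where
  "consecutive_mod5 S \<longleftrightarrow> (\<exists>s k. k \<le> 5 \<and> S = {(s + j) mod 5 | j. j < k})"

end

theory Submission
  imports Defs
begin

lemma all4: "(\<forall>i<(4::nat). P i) \<longleftrightarrow> P 0 \<and> P 1 \<and> P 2 \<and> P 3"
proof
  assume "P 0 \<and> P 1 \<and> P 2 \<and> P 3"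
  moreover have "i < 4 \<Longrightarrow> i = 0 \<or> i = 1 \<or> i = 2 \<or> i = (3::nat)" for i by auto
  ultimately show "\<forall>i<(4::nat). P i" by blast
qed auto
lemma n4: "[a,b,c,d]!0 = a" "[a,b,c,d]!1 = b" "[a,b,c,d]!2 = c" "[a,b,c,d]!3 = d"
  by (simp_all add: numeral_eq_Suc)
lemma l4: "length [a,b,c,d] = 4" by simp
lemma cyc4:
  assumes "distinct [x0,x1,x2,x3]" "E x0 x1" "E x1 x2" "E x2 x3" "E x3 x0"
    "\<not> E x0 x2" "\<not> E x1 x3" "\<forall>x y. E x y \<longrightarrow> E y x" "\<forall>x. \<not> E x x"
  shows "induced_cycle E [x0,x1,x2,x3]"
proof -
  have s: "E x1 x0" "E x2 x1" "E x3 x2" "E x0 x3" "\<not> E x2 x0" "\<not> E x3 x1"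
    "\<not> E x0 x0" "\<not> E x1 x1" "\<not> E x2 x2" "\<not> E x3 x3" using assms by blast+
  show ?thesis unfolding induced_cycle_def
    apply (simp only: l4 all4 n4)
    using assms s by simp
qed
lemma path4:
  assumes "distinct [x0,x1,x2,x3]" "E x0 x1" "E x1 x2" "E x2 x3" "\<not> E x0 x3"
    "\<not> E x0 x2" "\<not> E x1 x3" "\<forall>x y. E x y \<longrightarrow> E y x" "\<forall>x. \<not> E x x"
  shows "induced_path E [x0,x1,x2,x3]"
proof -
  have s: "E x1 x0" "E x2 x1" "E x3 x2" "\<not> E x3 x0" "\<not> E x2 x0" "\<not> E x3 x1"
    "\<not> E x0 x0" "\<not> E x1 x1" "\<not> E x2 x2" "\<not> E x3 x3" using assms by blast+
  show ?thesis unfolding induced_path_def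
    apply (simp only: l4 all4 n4)
    using assms s by simp
qed

lemma key:
  assumes g: "is_graph V E"
    and c4: "\<not> has_induced_C V E 4"
    and nb: "nice_blowup_C5 V E B"
    and vV: "v \<in> V" and vH: "v \<notin> VH B"
    and i: "i < 5" and a: "a \<in> B i" and c: "c \<in> B ((i+2) mod 5)"
    and va: "E v a" and vc: "E v c"
    and nv: "\<forall>u\<in>B ((i+1) mod 5). \<not> E v u"
  shows False
proof -
  have sym: "\<forall>x y. E x y \<longrightarrow> E y x" and irr: "\<forall>x. \<not> E x x"
    using g unfolding is_graph_def by auto
  have sub: "\<forall>i<5. B i \<subseteq> V" and cl: "\<forall>i<5. clique E (B i)"
    and dj: "\<forall>i<5. \<forall>j<5. i \<noteq> j \<longrightarrow> B i \<inter> B j = {}"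
    and nbr: "\<forall>i<5. \<forall>v\<in>B i. (\<exists>u\<in>B ((i + 4) mod 5). E v u) \<and> (\<exists>u\<in>B ((i + 1) mod 5). E v u)"
    and anti: "\<forall>i<5. \<forall>x\<in>B i. \<forall>y\<in>B ((i + 2) mod 5). \<not> E x y"
    and nice: "\<forall>i<5. \<forall>a\<in>B i. \<forall>b\<in>B ((i + 1) mod 5). \<forall>c\<in>B ((i + 1) mod 5). \<forall>d\<in>B ((i + 2) mod 5).
        b \<noteq> c \<longrightarrow> \<not> induces_P4 E {a, b, c, d}"
    using nb unfolding nice_blowup_C5_def by auto
  define j where "j = (i+1) mod 5"
  define k where "k = (i+2) mod 5"
  have j5: "j < 5" "k < 5" unfolding j_def k_def by auto
  have ne: "i \<noteq> j" "j \<noteq> k" "i \<noteq> k" using i unfolding j_def k_def by presburger+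
  have kj: "(k + 4) mod 5 = j" unfolding j_def k_def by presburger
  obtain b0 where b0: "b0 \<in> B j" "E a b0" using nbr i a unfolding j_def by blast
  obtain b1 where b1: "b1 \<in> B j" "E c b1" using nbr j5 c kj unfolding k_def by metis
  have vnot: "v \<notin> B t" if "t < 5" for t using vH that unfolding VH_def by auto
  have ac: "\<not> E a c" using anti i a c by auto
  have ij: "\<And>x y. x \<in> B i \<Longrightarrow> y \<in> B j \<Longrightarrow> x \<noteq> y" using dj i j5 ne by blast
  have jk: "\<And>x y. x \<in> B j \<Longrightarrow> y \<in> B k \<Longrightarrow> x \<noteq> y" using dj j5 ne by blast
  have ik: "\<And>x y. x \<in> B i \<Longrightarrow> y \<in> B k \<Longrightarrow> x \<noteq> y" using dj i j5 ne by blast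
  have VV: "set [v,a,b0,c] \<subseteq> V" "set [v,a,b1,c] \<subseteq> V"
    using sub i j5 a b0 b1 c[folded k_def] vV by auto
  show False
  proof (cases "E a b1")
    case True
    have "induced_cycle E [v,a,b1,c]"
      apply (rule cyc4)
      using True b1 va vc nv ac sym irr vnot[OF i] vnot[OF j5(1)] vnot[OF j5(2)]
        ij[OF a b1(1)] jk[OF b1(1) c[folded k_def]] ik[OF a c[folded k_def]] a c
      unfolding j_def k_def by auto
    then show False using c4 VV unfolding has_induced_C_def by fastforce
  next
    case False
    show False
    proof (cases "E b0 c")
      case True
      have "induced_cycle E [v,a,b0,c]"
        apply (rule cyc4)
        using True b0 va vc nv ac sym irr vnot[OF i] vnot[OF j5(1)] vnot[OF j5(2)]
          ij[OF a b0(1)] jk[OF b0(1) c[folded k_def]] ik[OF a c[folded k_def]] a c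
        unfolding j_def k_def by auto
      then show False using c4 VV unfolding has_induced_C_def by fastforce
    next
      case F2: False
      have neq: "b0 \<noteq> b1" using False b0 by auto
      have "E b0 b1" using cl j5 b0 b1 neq unfolding clique_def by auto
      have "induced_path E [a,b0,b1,c]"
        apply (rule path4)
        using False F2 \<open>E b0 b1\<close> b0 b1 ac sym irr neq
          ij[OF a b0(1)] ij[OF a b1(1)] jk[OF b0(1) c[folded k_def]] jk[OF b1(1) c[folded k_def]]
          ik[OF a c[folded k_def]] by auto
      hence "induces_P4 E {a,b0,b1,c}" unfolding induces_P4_def
        by (intro exI[of _ "[a,b0,b1,c]"]) auto
      then show False using nice i a b0 b1 c neq unfolding j_def by blast
    qed
  qed
qed

definition R :: "bool \<Rightarrow> bool \<Rightarrow> bool \<Rightarrow> bool \<Rightarrow> bool \<Rightarrow> nat set" where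
 "R p0 p1 p2 p3 p4 = (if p0 then {0} else {}) \<union> (if p1 then {1} else {}) \<union> (if p2 then {2} else {}) \<union> (if p3 then {3} else {}) \<union> (if p4 then {4} else {})"
lemma rng: "{f j | j. j < Suc k} = insert (f k) {f j | j. j < k}" "{f j | j. j < (0::nat)} = {}"
  by (auto simp: less_Suc_eq)
lemma cm: "k \<le> 5 \<Longrightarrow> X = {(s+j) mod 5|j. j<k} \<Longrightarrow> consecutive_mod5 X"
  unfolding consecutive_mod5_def by blast
lemma v0: "consecutive_mod5 (R False False False False False) \<and> card (R False False False False False) \<in> {0, 1, 2, 3, 5}"
proof
  show "consecutive_mod5 (R False False False False False)"
    by (rule cm[of "0" _ 0]) (auto simp: R_def rng)
qed (simp add: R_def)
lemma v1: "consecutive_mod5 (R False False False False True) \<and> card (R False False False False True) \<in> {0, 1, 2, 3, 5}"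
proof
  show "consecutive_mod5 (R False False False False True)"
    by (rule cm[of "Suc (0)" _ 4]) (auto simp: R_def rng)
qed (simp add: R_def)
lemma v2: "consecutive_mod5 (R False False False True False) \<and> card (R False False False True False) \<in> {0, 1, 2, 3, 5}"
proof
  show "consecutive_mod5 (R False False False True False)"
    by (rule cm[of "Suc (0)" _ 3]) (auto simp: R_def rng)
qed (simp add: R_def)
lemma v3: "consecutive_mod5 (R False False False True True) \<and> card (R False False False True True) \<in> {0, 1, 2, 3, 5}"
proof
  show "consecutive_mod5 (R False False False True True)"
    by (rule cm[of "Suc (Suc (0))" _ 3]) (auto simp: R_def rng)
qed (simp add: R_def)
lemma v4: "consecutive_mod5 (R False False True False False) \<and> card (R False False True False False) \<in> {0, 1, 2, 3, 5}"
proof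
  show "consecutive_mod5 (R False False True False False)"
    by (rule cm[of "Suc (0)" _ 2]) (auto simp: R_def rng)
qed (simp add: R_def)
lemma v5: "consecutive_mod5 (R False False True True False) \<and> card (R False False True True False) \<in> {0, 1, 2, 3, 5}"
proof
  show "consecutive_mod5 (R False False True True False)"
    by (rule cm[of "Suc (Suc (0))" _ 2]) (auto simp: R_def rng)
qed (simp add: R_def)
lemma v6: "consecutive_mod5 (R False False True True True) \<and> card (R False False True True True) \<in> {0, 1, 2, 3, 5}"
proof
  show "consecutive_mod5 (R False False True True True)"
    by (rule cm[of "Suc (Suc (Suc (0)))" _ 2]) (auto simp: R_def rng)
qed (simp add: R_def)
lemma v7: "consecutive_mod5 (R False True False False False) \<and> card (R False True False False False) \<in> {0, 1, 2, 3, 5}"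
proof
  show "consecutive_mod5 (R False True False False False)"
    by (rule cm[of "Suc (0)" _ 1]) (auto simp: R_def rng)
qed (simp add: R_def)
lemma v8: "consecutive_mod5 (R False True True False False) \<and> card (R False True True False False) \<in> {0, 1, 2, 3, 5}"
proof
  show "consecutive_mod5 (R False True True False False)"
    by (rule cm[of "Suc (Suc (0))" _ 1]) (auto simp: R_def rng)
qed (simp add: R_def)
lemma v9: "consecutive_mod5 (R False True True True False) \<and> card (R False True True True False) \<in> {0, 1, 2, 3, 5}"
proof
  show "consecutive_mod5 (R False True True True False)"
    by (rule cm[of "Suc (Suc (Suc (0)))" _ 1]) (auto simp: R_def rng)
qed (simp add: R_def)
lemma v10: "consecutive_mod5 (R True False False False False) \<and> card (R True False False False False) \<in> {0, 1, 2, 3, 5}"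
proof
  show "consecutive_mod5 (R True False False False False)"
    by (rule cm[of "Suc (0)" _ 0]) (auto simp: R_def rng)
qed (simp add: R_def)
lemma v11: "consecutive_mod5 (R True False False False True) \<and> card (R True False False False True) \<in> {0, 1, 2, 3, 5}"
proof
  show "consecutive_mod5 (R True False False False True)"
    by (rule cm[of "Suc (Suc (0))" _ 4]) (auto simp: R_def rng)
qed (simp add: R_def)
lemma v12: "consecutive_mod5 (R True False False True True) \<and> card (R True False False True True) \<in> {0, 1, 2, 3, 5}"
proof
  show "consecutive_mod5 (R True False False True True)"
    by (rule cm[of "Suc (Suc (Suc (0)))" _ 3]) (auto simp: R_def rng)
qed (simp add: R_def)
lemma v13: "consecutive_mod5 (R True True False False False) \<and> card (R True True False False False) \<in> {0, 1, 2, 3, 5}"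
proof
  show "consecutive_mod5 (R True True False False False)"
    by (rule cm[of "Suc (Suc (0))" _ 0]) (auto simp: R_def rng)
qed (simp add: R_def)
lemma v14: "consecutive_mod5 (R True True False False True) \<and> card (R True True False False True) \<in> {0, 1, 2, 3, 5}"
proof
  show "consecutive_mod5 (R True True False False True)"
    by (rule cm[of "Suc (Suc (Suc (0)))" _ 4]) (auto simp: R_def rng)
qed (simp add: R_def)
lemma v15: "consecutive_mod5 (R True True True False False) \<and> card (R True True True False False) \<in> {0, 1, 2, 3, 5}"
proof
  show "consecutive_mod5 (R True True True False False)"
    by (rule cm[of "Suc (Suc (Suc (0)))" _ 0]) (auto simp: R_def rng)
qed (simp add: R_def)
lemma v16: "consecutive_mod5 (R True True True True True) \<and> card (R True True True True True) \<in> {0, 1, 2, 3, 5}"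
proof
  show "consecutive_mod5 (R True True True True True)"
    by (rule cm[of "Suc (Suc (Suc (Suc (Suc (0)))))" _ 0]) (auto simp: R_def rng)
qed (simp add: R_def)
lemma combR: "(p0 \<and> p2 \<longrightarrow> p1) \<longrightarrow> (p1 \<and> p3 \<longrightarrow> p2) \<longrightarrow> (p2 \<and> p4 \<longrightarrow> p3) \<longrightarrow> (p3 \<and> p0 \<longrightarrow> p4) \<longrightarrow> (p4 \<and> p1 \<longrightarrow> p0) \<longrightarrow>
  consecutive_mod5 (R p0 p1 p2 p3 p4) \<and> card (R p0 p1 p2 p3 p4) \<in> {0, 1, 2, 3, 5}"
  by (induct p0; induct p1; induct p2; induct p3; induct p4) (simp_all only: simp_thms v0 v1 v2 v3 v4 v5 v6 v7 v8 v9 v10 v11 v12 v13 v14 v15 v16)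
lemma comb:
  assumes sub: "S \<subseteq> {0..<5::nat}"
    and cl: "\<forall>i<5. i \<in> S \<and> (i+2) mod 5 \<in> S \<longrightarrow> (i+1) mod 5 \<in> S"
  shows "consecutive_mod5 S \<and> card S \<in> {0, 1, 2, 3, 5}"
proof -
  have a: "(0+2) mod 5 = (2::nat)" "(0+1) mod 5 = (1::nat)" "(1+2) mod 5 = (3::nat)" "(1+1) mod 5 = (2::nat)"
    "(2+2) mod 5 = (4::nat)" "(2+1) mod 5 = (3::nat)" "(3+2) mod 5 = (0::nat)" "(3+1) mod 5 = (4::nat)"
    "(4+2) mod 5 = (1::nat)" "(4+1) mod 5 = (0::nat)" by simp_all
  have c1: "0\<in>S \<and> 2\<in>S \<longrightarrow> 1\<in>S" using cl[rule_format, of 0] unfolding a by simp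
  have c2: "1\<in>S \<and> 3\<in>S \<longrightarrow> 2\<in>S" using cl[rule_format, of 1] unfolding a by simp
  have c3: "2\<in>S \<and> 4\<in>S \<longrightarrow> 3\<in>S" using cl[rule_format, of 2] unfolding a by simp
  have c4: "3\<in>S \<and> 0\<in>S \<longrightarrow> 4\<in>S" using cl[rule_format, of 3] unfolding a by simp
  have c5: "4\<in>S \<and> 1\<in>S \<longrightarrow> 0\<in>S" using cl[rule_format, of 4] unfolding a by simp
  have five: "x < 5 \<Longrightarrow> x = 0 \<or> x = 1 \<or> x = 2 \<or> x = 3 \<or> x = (4::nat)" for x by auto
  have eq: "S = R (0\<in>S) (1\<in>S) (2\<in>S) (3\<in>S) (4\<in>S)"
    (is "S = ?R")
  proof
    show "S \<subseteq> ?R"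
    proof
      fix x assume "x \<in> S"
      with sub five[of x] show "x \<in> ?R" unfolding R_def by auto
    qed
  qed (auto simp: R_def)
  have h: "consecutive_mod5 ?R \<and> card ?R \<in> {0, 1, 2, 3, 5}"
    by (rule mp[OF mp[OF mp[OF mp[OF mp[OF combR c1] c2] c3] c4] c5])
  show ?thesis
    using h unfolding eq[symmetric] .
qed

theorem lemma4p2:
  fixes V :: "'a set" and E :: "'a \<Rightarrow> 'a \<Rightarrow> bool" and B :: "nat \<Rightarrow> 'a set" and v :: 'a
  assumes "is_graph V E"
    and "\<not> has_induced_P V E 7"
    and "\<not> has_induced_C V E 4"
    and "\<not> has_induced_C V E 6"
    and "\<not> has_induced_C V E 7"
    and "nice_blowup_C5 V E B"
    and "v \<in> V" and "v \<notin> VH B"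
  shows "consecutive_mod5 (supp E B v) \<and> card (supp E B v) \<in> {0, 1, 2, 3, 5}"
proof (rule comb)
  show "supp E B v \<subseteq> {0..<5}" unfolding supp_def by auto
  show "\<forall>i<5. i \<in> supp E B v \<and> (i+2) mod 5 \<in> supp E B v \<longrightarrow> (i+1) mod 5 \<in> supp E B v"
  proof (intro allI impI)
    fix i :: nat assume i: "i < 5" and h: "i \<in> supp E B v \<and> (i+2) mod 5 \<in> supp E B v"
    then obtain a c where "a \<in> B i" "E v a" "c \<in> B ((i+2) mod 5)" "E v c"
      unfolding supp_def by auto
    show "(i+1) mod 5 \<in> supp E B v"
    proof (rule ccontr)
      assume "(i+1) mod 5 \<notin> supp E B v"
      hence "\<forall>u\<in>B ((i+1) mod 5). \<not> E v u" unfolding supp_def by auto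
      then show False using key[OF assms(1,3,6,7,8) i] \<open>a \<in> B i\<close> \<open>E v a\<close> \<open>c \<in> B ((i+2) mod 5)\<close> \<open>E v c\<close>
        by blast
    qed
  qed
qed

end
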